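(* Let $f:\mathbb{R}^n\to\mathbb{R}$ be bounded, $\lambda>0$, $h>0$. On the grid $h\mathbb{Z}^n$ define $f_0(x_k)=f(x_k)$ and, for $i\ge1$, $$f_i(x_k)=\min\{f_{i-1}(x_k+rh)+\lambda h^2|r|^2\tau_i:\ r\in\mathbb{Z}^n,\ |r|_\infty\le1\},\qquad \tau_i=2i-1.$$ Then for every grid point $x_k\in h\mathbb{Z}^n$ and every $m=0,1,2,\dots$, $$f_m(x_k)=g_m(x_k):=\inf\{f(x_k+rh)+\lambda h^2|r|^2:\ r\in\mathbb{Z}^n,\ |r|_\infty\le m\}.$$
   Context: $|r|$ is the Euclidean norm and $|r|_\infty=\max_i|r_i|$ the maximum norm of $r\in\mathbb{Z}^n$. *)

theory Defs
  imports "HOL-Analysis.Analysis"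
begin

definition isqnorm :: "int ^ 'n :: finite \<Rightarrow> real" where
  "isqnorm r = (\<Sum>i\<in>UNIV. (real_of_int (r $ i))^2)"

definition imaxnorm :: "int ^ 'n :: finite \<Rightarrow> int" where
  "imaxnorm r = Max (range (\<lambda>i. \<bar>r $ i\<bar>))"

definition ivec :: "int ^ 'n :: finite \<Rightarrow> real ^ 'n" where
  "ivec r = (\<chi> i. real_of_int (r $ i))"

text \<open>The iterates f_i (evaluated at points of R^n; only grid points matter).\<close>
fun iter_f :: "(real ^ 'n :: finite \<Rightarrow> real) \<Rightarrow> real \<Rightarrow> real \<Rightarrow> nat \<Rightarrow> real ^ 'n \<Rightarrow> real" where
  "iter_f f lam h 0 x = f x"
| "iter_f f lam h (Suc i) x =
     Min {iter_f f lam h i (x + h *\<^sub>R ivec r) + lam * h^2 * isqnorm r * real (2 * Suc i - 1)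
          | r :: int ^ 'n. imaxnorm r \<le> 1}"

definition g_fun :: "(real ^ 'n :: finite \<Rightarrow> real) \<Rightarrow> real \<Rightarrow> real \<Rightarrow> nat \<Rightarrow> real ^ 'n \<Rightarrow> real" where
  "g_fun f lam h m x =
     Inf {f (x + h *\<^sub>R ivec r) + lam * h^2 * isqnorm r | r :: int ^ 'n. imaxnorm r \<le> int m}"

end

theory Submission
  imports Defs
begin

lemma imaxnorm_le: "imaxnorm (r::int^'n::finite) \<le> M \<longleftrightarrow> (\<forall>i. \<bar>r $ i\<bar> \<le> M)"
  unfolding imaxnorm_def by (subst Max_le_iff) auto

lemma fin_ball: "finite {r::int^'n::finite. imaxnorm r \<le> M}"
proof -
  have "{r::int^'n. imaxnorm r \<le> M} \<subseteq> vec_lambda ` (PiE UNIV (\<lambda>_. {-M..M}))"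
  proof
    fix r :: "int^'n" assume "r \<in> {r. imaxnorm r \<le> M}"
    hence "\<forall>i. \<bar>r $ i\<bar> \<le> M" by (simp add: imaxnorm_le)
    have "r $ i \<in> {-M..M}" for i
    proof -
      have "\<bar>r $ i\<bar> \<le> M" using \<open>\<forall>i. \<bar>r $ i\<bar> \<le> M\<close> by blast
      thus ?thesis by simp linarith
    qed
    hence "vec_nth r \<in> PiE UNIV (\<lambda>_. {-M..M})" by (simp add: PiE_iff)
    moreover have "r = vec_lambda (vec_nth r)" by simp
    ultimately show "r \<in> vec_lambda ` (PiE UNIV (\<lambda>_. {-M..M}))" by blast
  qed
  moreover have "finite (vec_lambda ` (PiE UNIV (\<lambda>_. {-M..M}) :: ('n \<Rightarrow> int) set))"
    by (intro finite_imageI finite_PiE) auto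
  ultimately show ?thesis by (rule finite_subset)
qed

lemma imaxnorm0: "imaxnorm (0::int^'n::finite) = 0"
  unfolding imaxnorm_def by simp

lemma ivec_add: "ivec (r + s) = ivec r + ivec s"
  unfolding ivec_def by (simp add: vec_eq_iff)

lemma isqnorm_ge0: "isqnorm r \<ge> 0"
  unfolding isqnorm_def by (simp add: sum_nonneg)

lemma comp_ineq:
  fixes a b :: int and i :: nat
  assumes "\<bar>a\<bar> \<le> int i" "\<bar>b\<bar> \<le> 1"
  shows "(real_of_int (a + b))^2 \<le> (real_of_int a)^2 + real (2 * i + 1) * (real_of_int b)^2"
proof -
  have "b = -1 \<or> b = 0 \<or> b = 1" using assms(2) by auto
  moreover have "real_of_int \<bar>a\<bar> \<le> real i" using assms(1) by linarith
  ultimately show ?thesis by (auto simp: power2_eq_square algebra_simps abs_le_iff)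
qed

lemma comp_eq:
  fixes q :: int and i :: nat
  assumes "\<bar>q\<bar> \<le> int i + 1"
  defines "s \<equiv> (if \<bar>q\<bar> = int i + 1 then sgn q else 0)"
  shows "\<bar>q - s\<bar> \<le> int i" "\<bar>s\<bar> \<le> 1"
    "(real_of_int (q - s))^2 + real (2 * i + 1) * (real_of_int s)^2 = (real_of_int q)^2"
proof -
  show "\<bar>q - s\<bar> \<le> int i" using assms by (auto simp: s_def sgn_if)
  show "\<bar>s\<bar> \<le> 1" by (auto simp: s_def sgn_if)
  show "(real_of_int (q - s))^2 + real (2 * i + 1) * (real_of_int s)^2 = (real_of_int q)^2"
  proof (cases "\<bar>q\<bar> = int i + 1")
    case True
    then have "q = int i + 1 \<or> q = - int i - 1" by auto
    then show ?thesis using True by (auto simp: s_def power2_eq_square algebra_simps)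
  next
    case False then show ?thesis by (simp add: s_def)
  qed
qed

definition G :: "(real ^ 'n :: finite \<Rightarrow> real) \<Rightarrow> real \<Rightarrow> real \<Rightarrow> nat \<Rightarrow> real ^ 'n \<Rightarrow> real" where
  "G f lam h m x =
     Min {f (x + h *\<^sub>R ivec r) + lam * h^2 * isqnorm r | r :: int ^ 'n. imaxnorm r \<le> int m}"

lemma setfin:
  "finite {F r | r :: int ^ 'n::finite. imaxnorm r \<le> M}"
  "{F r | r :: int ^ 'n::finite. imaxnorm r \<le> M} \<noteq> {}" if "M \<ge> 0"
proof -
  have e: "{F r | r :: int ^ 'n::finite. imaxnorm r \<le> M} = F ` {r. imaxnorm r \<le> M}" by auto
  show "finite {F r | r :: int ^ 'n::finite. imaxnorm r \<le> M}" unfolding e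
    using fin_ball by blast
  have "imaxnorm (0::int^'n) \<le> M" using that by (simp add: imaxnorm_le)
  then show "{F r | r :: int ^ 'n::finite. imaxnorm r \<le> M} \<noteq> {}" by blast
qed

lemma main:
  fixes f :: "real ^ 'n :: finite \<Rightarrow> real" and lam h :: real
  assumes "lam > 0"
  shows "iter_f f lam h m x = G f lam h m x"
proof (induction m arbitrary: x)
  case 0
  have "{f (x + h *\<^sub>R ivec r) + lam * h^2 * isqnorm r | r :: int ^ 'n. imaxnorm r \<le> int 0}
      = {f x}"
  proof -
    have "imaxnorm r \<le> 0 \<longleftrightarrow> r = 0" for r :: "int^'n"
      by (auto simp: imaxnorm_le vec_eq_iff)
    moreover have "ivec (0::int^'n) = 0" "isqnorm (0::int^'n) = 0"
      by (auto simp: ivec_def isqnorm_def vec_eq_iff)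
    ultimately show ?thesis by auto
  qed
  then show ?case by (simp add: G_def)
next
  case (Suc i)
  define c where "c = lam * h^2"
  have c0: "c \<ge> 0" using assms by (simp add: c_def)
  define A where "A = {G f lam h i (x + h *\<^sub>R ivec s) + c * isqnorm s * real (2 * Suc i - 1)
          | s :: int ^ 'n. imaxnorm s \<le> 1}"
  define B where "B = {f (x + h *\<^sub>R ivec r) + c * isqnorm r | r :: int ^ 'n. imaxnorm r \<le> int (Suc i)}"
  have lhs: "iter_f f lam h (Suc i) x = Min A"
    by (simp add: A_def Suc.IH c_def)
  have rhs: "G f lam h (Suc i) x = Min B" by (simp add: G_def B_def c_def)
  have fA1: "finite A" unfolding A_def by (rule setfin(1)) simp
  have fA2: "A \<noteq> {}" unfolding A_def by (rule setfin(2)) simp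
  note fA = fA1 fA2
  have fB1: "finite B" unfolding B_def by (rule setfin(1)) simp
  have fB2: "B \<noteq> {}" unfolding B_def by (rule setfin(2)) simp
  note fB = fB1 fB2
  have two: "real (2 * Suc i - 1) = real (2 * i + 1)" by simp
  have "Min A \<le> Min B"
  proof (rule Min.boundedI[OF fB])
    fix b assume "b \<in> B"
    then obtain q :: "int^'n" where q: "imaxnorm q \<le> int (Suc i)"
      and b: "b = f (x + h *\<^sub>R ivec q) + c * isqnorm q" unfolding B_def by auto
    have qc: "\<bar>q $ j\<bar> \<le> int i + 1" for j using q by (simp add: imaxnorm_le add.commute)
    define s :: "int^'n" where "s = (\<chi> j. if \<bar>q $ j\<bar> = int i + 1 then sgn (q $ j) else 0)"
    define r where "r = q - s"
    have rc: "\<bar>r $ j\<bar> \<le> int i" and sc: "\<bar>s $ j\<bar> \<le> 1"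
      and eqj: "(real_of_int (r $ j))^2 + real (2 * i + 1) * (real_of_int (s $ j))^2 = (real_of_int (q $ j))^2" for j
      using comp_eq[OF qc[of j]] by (simp_all add: r_def s_def)
    have rm: "imaxnorm r \<le> int i" using rc by (simp add: imaxnorm_le)
    have sm: "imaxnorm s \<le> 1" using sc by (simp add: imaxnorm_le)
    have nq: "isqnorm r + real (2 * i + 1) * isqnorm s = isqnorm q"
      unfolding isqnorm_def sum_distrib_left sum.distrib[symmetric] using eqj by simp
    have qrs: "x + h *\<^sub>R ivec s + h *\<^sub>R ivec r = x + h *\<^sub>R ivec q"
    proof -
      have "ivec q = ivec s + ivec r" using ivec_add[of s r] by (simp add: r_def)
      thus ?thesis by (simp add: scaleR_right_distrib add.assoc)
    qed
    have "G f lam h i (x + h *\<^sub>R ivec s) \<le> f (x + h *\<^sub>R ivec s + h *\<^sub>R ivec r) + c * isqnorm r"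
      unfolding G_def c_def[symmetric]
      by (rule Min_le) (use setfin[of "int i"] rm in auto)
    hence "G f lam h i (x + h *\<^sub>R ivec s) + c * isqnorm s * real (2 * Suc i - 1) \<le> b"
      unfolding b qrs nq[symmetric] two by (simp add: algebra_simps)
    moreover have "G f lam h i (x + h *\<^sub>R ivec s) + c * isqnorm s * real (2 * Suc i - 1) \<in> A"
      unfolding A_def using sm by blast
    ultimately show "Min A \<le> b" using fA Min_le order_trans by blast
  qed
  moreover have "Min B \<le> Min A"
  proof (rule Min.boundedI[OF fA])
    fix a assume "a \<in> A"
    then obtain s :: "int^'n" where sm: "imaxnorm s \<le> 1"
      and a: "a = G f lam h i (x + h *\<^sub>R ivec s) + c * isqnorm s * real (2 * Suc i - 1)"
      unfolding A_def by auto
    have "G f lam h i (x + h *\<^sub>R ivec s) \<in>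
      {f (x + h *\<^sub>R ivec s + h *\<^sub>R ivec r) + c * isqnorm r | r :: int ^ 'n. imaxnorm r \<le> int i}"
      unfolding G_def c_def[symmetric] by (rule Min_in[OF setfin(1) setfin(2)]) simp_all
    then obtain r :: "int^'n" where rm: "imaxnorm r \<le> int i" and
      gr: "G f lam h i (x + h *\<^sub>R ivec s) = f (x + h *\<^sub>R ivec s + h *\<^sub>R ivec r) + c * isqnorm r"
      by auto
    define q where "q = s + r"
    have rc: "\<bar>r $ j\<bar> \<le> int i" and sc: "\<bar>s $ j\<bar> \<le> 1" for j
      using rm sm by (auto simp: imaxnorm_le)
    have "\<bar>q $ j\<bar> \<le> int (Suc i)" for j using rc[of j] sc[of j] by (simp add: q_def)
    hence qm: "imaxnorm q \<le> int (Suc i)" by (simp add: imaxnorm_le)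
    have "isqnorm q \<le> isqnorm r + real (2 * i + 1) * isqnorm s"
      unfolding isqnorm_def sum_distrib_left sum.distrib[symmetric]
      by (rule sum_mono) (use comp_ineq[OF rc sc] in \<open>simp add: q_def add.commute\<close>)
    hence "c * isqnorm q \<le> c * (isqnorm r + real (2 * i + 1) * isqnorm s)"
      using c0 by (rule mult_left_mono)
    moreover have qrs: "x + h *\<^sub>R ivec s + h *\<^sub>R ivec r = x + h *\<^sub>R ivec q"
      by (simp add: q_def ivec_add algebra_simps)
    ultimately have "f (x + h *\<^sub>R ivec q) + c * isqnorm q \<le> a"
      unfolding a gr two qrs by (simp add: algebra_simps)
    moreover have "f (x + h *\<^sub>R ivec q) + c * isqnorm q \<in> B" unfolding B_def using qm by blast
    ultimately show "Min B \<le> a" using fB Min_le order_trans by blast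
  qed
  ultimately show ?case using lhs rhs by simp
qed

theorem theorem4p7:
  fixes f :: "real ^ 'n :: finite \<Rightarrow> real" and lam h :: real
  assumes "bounded (range f)" and "lam > 0" and "h > 0"
  shows "\<forall>(k :: int ^ 'n) (m :: nat).
           iter_f f lam h m (h *\<^sub>R ivec k) = g_fun f lam h m (h *\<^sub>R ivec k)"
proof (intro allI)
  fix k :: "int^'n" and m :: nat
  have fS: "finite {f (h *\<^sub>R ivec k + h *\<^sub>R ivec r) + lam * h^2 * isqnorm r | r :: int ^ 'n. imaxnorm r \<le> int m}"
    "{f (h *\<^sub>R ivec k + h *\<^sub>R ivec r) + lam * h^2 * isqnorm r | r :: int ^ 'n. imaxnorm r \<le> int m} \<noteq> {}"
    by (rule setfin(1), simp, rule setfin(2), simp)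
  show "iter_f f lam h m (h *\<^sub>R ivec k) = g_fun f lam h m (h *\<^sub>R ivec k)"
    unfolding main[OF assms(2)] G_def g_fun_def using cInf_eq_Min[OF fS] by simp
qed

end
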